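(* Let $d\ge2$, $0\le r\le d-1$ and $M\ge1$ be integers. Let $N_{r,d}(M)$ be the number of distinct orbits $o(\mathbf{x})$ with $\mathbf{x}\in[0,M]^2\cap\mathbb{Z}^2$ and $\operatorname{length}(o(\mathbf{x}))\equiv r\pmod d$. Then $$N_{r,d}(M)=\begin{cases}0,& \text{if } 2\,\|\, d \text{ and } 2\nmid r,\ \text{or } 4\mid d\text{ and } 4\nmid r;\\ \frac1d M^2+O(M),&\text{if } 2\,\|\, d\text{ and } 2\mid r;\\ \frac2dM^2+O(M),&\text{if } 4\mid d\text{ and }4\mid r;\\ \frac1{2d}M^2+O(M),&\text{if }2\nmid d.\end{cases}$$ Here $2\,\|\,d$ means $2\mid d$ and $4\nmid d$.
   Context: Define $\mathcal K_1,\mathcal K_2:\mathbb{Z}^2\to\mathbb{Z}^2$ by $\mathcal K_1(x_1,x_2)=(-x_1+x_2,x_2)$ and $\mathcal K_2(x_1,x_2)=(x_1,x_1-x_2)$. The orbit $o(\mathbf{x})$ of $\mathbf{x}=(x_1,x_2)$ is the set of points obtained from $\mathbf{x}$ by repeatedly applying $\mathcal K_1$ and $\mathcal K_2$. It consists of $(x_1,x_2)$, $(-x_1+x_2,x_2)$, $(-x_1+x_2,-x_1)$, $(-x_2,-x_1)$, $(-x_2,x_1-x_2)$, $(x_1,x_1-x_2)$. Orbits partition $\mathbb{Z}^2$. The length (perimeter) of the orbit is the Euclidean length of the closed path through these six points in the listed order: $$\operatorname{length}(o(\mathbf{x}))=2\big(|2x_1-x_2|+|x_1+x_2|+|2x_2-x_1|\big).$$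 *)

theory Defs
  imports Complex_Main "HOL-Number_Theory.Cong"
begin

definition K1 :: "int \<times> int \<Rightarrow> int \<times> int" where
  "K1 p = (- fst p + snd p, snd p)"

definition K2 :: "int \<times> int \<Rightarrow> int \<times> int" where
  "K2 p = (fst p, fst p - snd p)"

definition Kstep :: "((int \<times> int) \<times> (int \<times> int)) set" where
  "Kstep = {(p, K1 p) | p. True} \<union> {(p, K2 p) | p. True}"

definition orbit :: "int \<times> int \<Rightarrow> (int \<times> int) set" where
  "orbit x = {y. (x, y) \<in> Kstep\<^sup>*}"

text \<open>Length (perimeter) of the orbit of x, given by the closed formula.\<close>
definition orbit_length :: "int \<times> int \<Rightarrow> int" where
  "orbit_length x = 2 * (\<bar>2 * fst x - snd x\<bar> + \<bar>fst x + snd x\<bar> + \<bar>2 * snd x - fst x\<bar>)"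

definition box :: "nat \<Rightarrow> (int \<times> int) set" where
  "box M = {x. 0 \<le> fst x \<and> fst x \<le> int M \<and> 0 \<le> snd x \<and> snd x \<le> int M}"

definition N_count :: "int \<Rightarrow> int \<Rightarrow> nat \<Rightarrow> nat" where
  "N_count r d M = card {orbit x | x. x \<in> box M \<and> [orbit_length x = r] (mod d)}"

end

theory Submission imports Defs begin

definition six :: "int \<times> int \<Rightarrow> (int \<times> int) set" where
  "six p = {(fst p, snd p), (snd p - fst p, snd p), (snd p - fst p, - fst p),
            (- snd p, - fst p), (- snd p, fst p - snd p), (fst p, fst p - snd p)}"

lemma six_closed: "y \<in> six x \<Longrightarrow> K1 y \<in> six x \<and> K2 y \<in> six x"
  by (auto simp: six_def K1_def K2_def)

lemma orbit_sub: "orbit x \<subseteq> six x"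
proof
  fix y assume "y \<in> orbit x"
  hence "(x, y) \<in> Kstep\<^sup>*" by (simp add: orbit_def)
  thus "y \<in> six x"
  proof (induct rule: rtrancl_induct)
    case base show ?case by (simp add: six_def)
  next
    case (step y z)
    have "z = K1 y \<or> z = K2 y" using step(2) by (auto simp: Kstep_def)
    thus ?case using six_closed[OF step(3)] by auto
  qed
qed

lemma six_sub: "six x \<subseteq> orbit x"
proof -
  have s1: "\<And>p. (p, K1 p) \<in> Kstep" and s2: "\<And>p. (p, K2 p) \<in> Kstep" by (auto simp: Kstep_def)
  have r0: "(x, x) \<in> Kstep\<^sup>*" by simp
  have r1: "(x, K1 x) \<in> Kstep\<^sup>*" using r0 s1 by (rule rtrancl_into_rtrancl)
  have r2: "(x, K2 (K1 x)) \<in> Kstep\<^sup>*" using r1 s2 by (rule rtrancl_into_rtrancl)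
  have r3: "(x, K1 (K2 (K1 x))) \<in> Kstep\<^sup>*" using r2 s1 by (rule rtrancl_into_rtrancl)
  have r4: "(x, K2 (K1 (K2 (K1 x)))) \<in> Kstep\<^sup>*" using r3 s2 by (rule rtrancl_into_rtrancl)
  have r5: "(x, K2 x) \<in> Kstep\<^sup>*" using r0 s2 by (rule rtrancl_into_rtrancl)
  show ?thesis using r0 r1 r2 r3 r4 r5
    by (auto simp: six_def orbit_def K1_def K2_def)
qed

lemma orbit_six: "orbit x = six x"
  using orbit_sub six_sub by blast

lemma six_swap: "y \<in> six x \<Longrightarrow> x \<in> six y"
  by (auto simp: six_def)

lemma orbit_trans: "y \<in> orbit x \<Longrightarrow> orbit y \<subseteq> orbit x"
  unfolding orbit_def by (auto intro: rtrancl_trans)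

lemma six_sym: "y \<in> six x \<Longrightarrow> six y = six x"
proof -
  assume "y \<in> six x"
  hence "y \<in> orbit x" "x \<in> orbit y" using six_swap orbit_six by auto
  thus ?thesis using orbit_trans orbit_six by blast
qed

lemma len_K1: "orbit_length (K1 p) = orbit_length p"
  by (simp add: orbit_length_def K1_def; arith)
lemma len_K2: "orbit_length (K2 p) = orbit_length p"
  by (simp add: orbit_length_def K2_def; arith)

definition Rset :: "nat \<Rightarrow> (int \<times> int) set" where
  "Rset M = {p. 0 \<le> fst p \<and> fst p \<le> int M \<and> 0 \<le> snd p \<and> snd p \<le> int M
               \<and> fst p \<le> 2 * snd p \<and> snd p \<le> 2 * fst p}"

lemma R_len: "x \<in> Rset M \<Longrightarrow> orbit_length x = 4 * (fst x + snd x)"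
  by (auto simp: Rset_def orbit_length_def)

lemma R_inj: "x \<in> Rset M \<Longrightarrow> y \<in> Rset M \<Longrightarrow> orbit x = orbit y \<Longrightarrow> x = y"
proof -
  assume a: "x \<in> Rset M" "y \<in> Rset M" "orbit x = orbit y"
  have "y \<in> six x" using a(3) orbit_six six_def by auto
  obtain p q where x: "x = (p, q)" by fastforce
  obtain u v where y: "y = (u, v)" by fastforce
  have h: "(u = p \<and> v = q) \<or> (u = q - p \<and> v = q) \<or> (u = q - p \<and> v = - p) \<or> (u = - q \<and> v = - p)
     \<or> (u = - q \<and> v = p - q) \<or> (u = p \<and> v = p - q)" using `y \<in> six x` x y by (simp add: six_def)
  have "0 \<le> p" "0 \<le> q" "p \<le> 2*q" "q \<le> 2*p" "0 \<le> u" "0 \<le> v" "u \<le> 2*v" "v \<le> 2*u"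
    using a(1,2) x y by (auto simp: Rset_def)
  hence "u = p \<and> v = q" using h by arith
  thus "x = y" using x y by simp
qed

lemma R_rep: "x \<in> box M \<Longrightarrow> \<exists>y \<in> Rset M. orbit y = orbit x \<and> orbit_length y = orbit_length x"
proof -
  assume x: "x \<in> box M"
  obtain a b where ab: "x = (a, b)" by fastforce
  show ?thesis
  proof (cases "a \<le> 2 * b \<and> b \<le> 2 * a")
    case True
    hence "x \<in> Rset M" using x ab by (auto simp: Rset_def box_def)
    thus ?thesis by blast
  next
    case F: False
    show ?thesis
    proof (cases "a > 2 * b")
      case True
      have "K2 x \<in> six x" by (simp add: ab six_def K2_def)
      hence "orbit (K2 x) = orbit x" by (simp add: orbit_six six_sym)
      moreover have "K2 x \<in> Rset M" using True x ab by (auto simp: Rset_def box_def K2_def)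
      ultimately show ?thesis using len_K2 by blast
    next
      case False
      have "K1 x \<in> six x" by (simp add: ab six_def K1_def)
      hence "orbit (K1 x) = orbit x" by (simp add: orbit_six six_sym)
      moreover have "K1 x \<in> Rset M" using F False x ab by (auto simp: Rset_def box_def K1_def)
      ultimately show ?thesis using len_K1 by blast
    qed
  qed
qed

lemma div_step: fixes X m :: int assumes "m > 0"
  shows "(X+1) div m = X div m + (if (X+1) mod m = 0 then 1 else 0)"
proof -
  define q s where "q = X div m" and "s = X mod m"
  have s: "0 \<le> s" "s < m" using assms by (auto simp: s_def)
  have e: "X + 1 = (s+1) + q*m" by (simp add: q_def s_def)
  have d: "(X+1) div m = (s+1) div m + q" "(X+1) mod m = (s+1) mod m"
    unfolding e using assms by simp_all
  show ?thesis
  proof (cases "s + 1 = m")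
    case True thus ?thesis using d assms q_def by simp
  next
    case False
    hence "(s+1) div m = 0" "(s+1) mod m = s+1" using s by simp_all
    thus ?thesis using d s q_def by simp
  qed
qed

lemma mod_iff: fixes z c m :: int assumes "0 \<le> c" "c < m"
  shows "z mod m = c \<longleftrightarrow> (z - c) mod m = 0"
  by (smt (verit, best) assms(1,2) mod_diff_eq mod_pos_pos_trivial)

lemma cnt_exact:
  fixes m c lo e :: int assumes m: "m > 0" and c: "0 \<le> c" "c < m"
  shows "int (card {b \<in> {lo..lo + int n - 1}. (b + e) mod m = c})
         = (lo + int n - 1 + e - c) div m - (lo - 1 + e - c) div m"
proof (induction n)
  case 0 thus ?case by simp
next
  case (Suc n)
  let ?z = "lo + int n"
  have I: "{lo..lo + int (Suc n) - 1} = insert ?z {lo..lo + int n - 1}" by auto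
  have F: "finite {b \<in> {lo..lo + int n - 1}. (b + e) mod m = c}" by (rule finite_subset[of _ "{lo..lo + int n - 1}"]) auto
  have N: "?z \<notin> {b \<in> {lo..lo + int n - 1}. (b + e) mod m = c}" by simp
  have P: "(?z + e) mod m = c \<longleftrightarrow> (lo + int n - 1 + e - c + 1) mod m = 0"
    using mod_iff[OF c, of "?z + e"] by (simp add: algebra_simps)
  have D: "(lo + int n - 1 + e - c + 1) div m = (lo + int n - 1 + e - c) div m
           + (if (lo + int n - 1 + e - c + 1) mod m = 0 then 1 else 0)"
    by (rule div_step[OF m])
  show ?case
  proof (cases "(?z + e) mod m = c")
    case True
    hence "{b \<in> {lo..lo + int (Suc n) - 1}. (b + e) mod m = c}
       = insert ?z {b \<in> {lo..lo + int n - 1}. (b + e) mod m = c}" using I by auto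
    hence "int (card {b \<in> {lo..lo + int (Suc n) - 1}. (b + e) mod m = c})
        = int (card {b \<in> {lo..lo + int n - 1}. (b + e) mod m = c}) + 1"
      using F N by simp
    thus ?thesis using Suc.IH D P True by (simp add: algebra_simps)
  next
    case False
    hence "{b \<in> {lo..lo + int (Suc n) - 1}. (b + e) mod m = c}
       = {b \<in> {lo..lo + int n - 1}. (b + e) mod m = c}" using I by auto
    thus ?thesis using Suc.IH D P False by (simp add: algebra_simps)
  qed
qed

lemma cnt_bound:
  fixes m c lo hi e :: int assumes m: "m > 0" and c: "0 \<le> c" "c < m" and h: "lo \<le> hi + 1"
  shows "\<bar>m * int (card {b \<in> {lo..hi}. (b + e) mod m = c}) - (hi - lo + 1)\<bar> \<le> m"
proof -
  define n where "n = nat (hi - lo + 1)"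
  have hn: "hi = lo + int n - 1" using h by (simp add: n_def)
  define Y1 Y0 where "Y1 = hi + e - c" and "Y0 = lo - 1 + e - c"
  have E: "int (card {b \<in> {lo..hi}. (b + e) mod m = c}) = Y1 div m - Y0 div m"
    using cnt_exact[OF m c, of lo n e] hn Y1_def Y0_def by simp
  have a1: "m * (Y1 div m) \<le> Y1" "Y1 - m < m * (Y1 div m)"
    using m by (smt (verit) div_mult_mod_eq mod_pos_pos_trivial pos_mod_bound pos_mod_sign mult.commute)+
  have a0: "m * (Y0 div m) \<le> Y0" "Y0 - m < m * (Y0 div m)"
    using m by (smt (verit) div_mult_mod_eq mod_pos_pos_trivial pos_mod_bound pos_mod_sign mult.commute)+
  have "m * int (card {b \<in> {lo..hi}. (b + e) mod m = c}) = m * (Y1 div m) - m * (Y0 div m)"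
    using E by (simp add: right_diff_distrib)
  thus ?thesis using a1 a0 Y1_def Y0_def by linarith
qed

definition T :: "int \<Rightarrow> int \<Rightarrow> nat \<Rightarrow> (int \<times> int) set" where
  "T m c M = {p \<in> Rset M. (fst p + snd p) mod m = c}"

lemma T_fin: "finite (T m c M)"
proof -
  have "T m c M \<subseteq> {0..int M} \<times> {0..int M}" by (auto simp: T_def Rset_def)
  thus ?thesis by (rule finite_subset) simp
qed

lemma T_step:
  fixes m c :: int and M :: nat
  defines "L \<equiv> (int M + 2) div 2"
  shows "T m c (Suc M) = T m c M
     \<union> (\<lambda>b. (int M + 1, b)) ` {b \<in> {L..int M + 1}. (b + (int M + 1)) mod m = c}
     \<union> (\<lambda>a. (a, int M + 1)) ` {a \<in> {L..int M}. (a + (int M + 1)) mod m = c}"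
proof -
  have Lb: "\<And>b. L \<le> b \<longleftrightarrow> int M + 1 \<le> 2 * b" unfolding L_def by presburger
  show ?thesis
  proof (intro set_eqI iffI)
    fix p assume "p \<in> T m c (Suc M)"
    then obtain a b where p: "p = (a, b)" and h: "0 \<le> a" "a \<le> int M + 1" "0 \<le> b" "b \<le> int M + 1"
      "a \<le> 2 * b" "b \<le> 2 * a" "(a + b) mod m = c" by (cases p) (auto simp: T_def Rset_def)
    consider "a \<le> int M \<and> b \<le> int M" | "a = int M + 1" | "a \<le> int M \<and> b = int M + 1" using h by linarith
    thus "p \<in> T m c M
     \<union> (\<lambda>b. (int M + 1, b)) ` {b \<in> {L..int M + 1}. (b + (int M + 1)) mod m = c}
     \<union> (\<lambda>a. (a, int M + 1)) ` {a \<in> {L..int M}. (a + (int M + 1)) mod m = c}"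
    proof cases
      case 1 thus ?thesis using h p by (auto simp: T_def Rset_def)
    next
      case 2
      hence "b \<in> {b \<in> {L..int M + 1}. (b + (int M + 1)) mod m = c}" using h Lb by (auto simp: add.commute)
      thus ?thesis using p 2 by blast
    next
      case 3
      hence "a \<in> {a \<in> {L..int M}. (a + (int M + 1)) mod m = c}" using h Lb by auto
      thus ?thesis using p 3 by blast
    qed
  next
    fix p assume "p \<in> T m c M
     \<union> (\<lambda>b. (int M + 1, b)) ` {b \<in> {L..int M + 1}. (b + (int M + 1)) mod m = c}
     \<union> (\<lambda>a. (a, int M + 1)) ` {a \<in> {L..int M}. (a + (int M + 1)) mod m = c}"
    thus "p \<in> T m c (Suc M)" using Lb by (auto simp: T_def Rset_def add.commute)
  qed
qed

lemma T_bound: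
  fixes m c :: int assumes m: "m > 0" and c: "0 \<le> c" "c < m"
  shows "\<bar>2 * m * int (card (T m c M)) - int M ^ 2\<bar> \<le> (4 * m + 3) * int M + 2 * m"
proof (induction M)
  case 0
  have "T m c 0 \<subseteq> {(0, 0)}" by (auto simp: T_def Rset_def)
  hence "card (T m c 0) \<le> card {(0::int, 0::int)}" by (intro card_mono) auto
  hence k: "int (card (T m c 0)) \<le> 1" by simp
  have "2 * m * int (card (T m c 0)) \<le> 2 * m * 1"
    using k m by (intro mult_left_mono) auto
  moreover have "0 \<le> 2 * m * int (card (T m c 0))" using m by simp
  ultimately show ?case by simp
next
  case (Suc M)
  define L where "L = (int M + 2) div 2"
  define A where "A = {b \<in> {L..int M + 1}. (b + (int M + 1)) mod m = c}"
  define B where "B = {a \<in> {L..int M}. (a + (int M + 1)) mod m = c}"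
  have L2: "2 * L = int M + 1 \<or> 2 * L = int M + 2" unfolding L_def by presburger
  have fA: "finite A" by (rule finite_subset[of _ "{L..int M + 1}"]) (auto simp: A_def)
  have fB: "finite B" by (rule finite_subset[of _ "{L..int M}"]) (auto simp: B_def)
  have eq: "T m c (Suc M) = T m c M \<union> (\<lambda>b. (int M + 1, b)) ` A \<union> (\<lambda>a. (a, int M + 1)) ` B"
    using T_step[of m c M] unfolding A_def B_def L_def by simp
  have d1: "T m c M \<inter> (\<lambda>b. (int M + 1, b)) ` A = {}" by (auto simp: T_def Rset_def)
  have d2: "(T m c M \<union> (\<lambda>b. (int M + 1, b)) ` A) \<inter> (\<lambda>a. (a, int M + 1)) ` B = {}"
    by (auto simp: T_def Rset_def B_def)
  have cA: "card ((\<lambda>b. (int M + 1, b)) ` A) = card A" by (rule card_image) (auto simp: inj_on_def)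
  have cB: "card ((\<lambda>a. (a, int M + 1)) ` B) = card B" by (rule card_image) (auto simp: inj_on_def)
  have C: "card (T m c (Suc M)) = card (T m c M) + card A + card B"
    unfolding eq using d1 d2 cA cB fA fB T_fin[of m c M]
    by (simp add: card_Un_disjoint)
  have bA: "\<bar>m * int (card A) - (int M + 1 - L + 1)\<bar> \<le> m"
    unfolding A_def by (rule cnt_bound[OF m c]) (use L2 in linarith)
  have bB: "\<bar>m * int (card B) - (int M - L + 1)\<bar> \<le> m"
    unfolding B_def by (rule cnt_bound[OF m c]) (use L2 in linarith)
  have X: "2 * m * int (card (T m c (Suc M))) = 2 * m * int (card (T m c M)) + 2 * (m * int (card A)) + 2 * (m * int (card B))"
    using C by (simp add: algebra_simps)
  have Y: "int (Suc M) ^ 2 = int M ^ 2 + 2 * int M + 1" by (simp add: power2_eq_square algebra_simps)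
  have Z: "(4 * m + 3) * int (Suc M) + 2 * m = (4 * m + 3) * int M + 2 * m + (4 * m + 3)" by (simp add: algebra_simps)
  show ?case unfolding X Y Z using Suc.IH bA bB L2 by linarith
qed


lemma N_card: "N_count r d M = card {y \<in> Rset M. [4*(fst y + snd y) = r] (mod d)}"
proof -
  have E: "{orbit x | x. x \<in> box M \<and> [orbit_length x = r] (mod d)}
        = orbit ` {y \<in> Rset M. [4*(fst y + snd y) = r] (mod d)}"
  proof (intro set_eqI iffI)
    fix Q assume "Q \<in> {orbit x | x. x \<in> box M \<and> [orbit_length x = r] (mod d)}"
    then obtain x where x: "Q = orbit x" "x \<in> box M" "[orbit_length x = r] (mod d)" by blast
    obtain y where y: "y \<in> Rset M" "orbit y = orbit x" "orbit_length y = orbit_length x"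
      using R_rep[OF x(2)] by blast
    have "[4*(fst y + snd y) = r] (mod d)" using R_len[OF y(1)] y(3) x(3) by simp
    thus "Q \<in> orbit ` {y \<in> Rset M. [4*(fst y + snd y) = r] (mod d)}" using y x by auto
  next
    fix Q assume "Q \<in> orbit ` {y \<in> Rset M. [4*(fst y + snd y) = r] (mod d)}"
    then obtain y where y: "Q = orbit y" "y \<in> Rset M" "[4*(fst y + snd y) = r] (mod d)" by blast
    have "y \<in> box M" using y(2) by (auto simp: Rset_def box_def)
    moreover have "[orbit_length y = r] (mod d)" using R_len[OF y(2)] y(3) by simp
    ultimately show "Q \<in> {orbit x | x. x \<in> box M \<and> [orbit_length x = r] (mod d)}" using y by blast
  qed
  have "inj_on orbit {y \<in> Rset M. [4*(fst y + snd y) = r] (mod d)}"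
    by (rule inj_onI) (use R_inj in blast)
  thus ?thesis unfolding N_count_def E by (rule card_image)
qed

lemma N_T: assumes "\<And>s. [4*s = r] (mod d) \<longleftrightarrow> s mod m = c"
  shows "N_count r d M = card (T m c M)"
  unfolding N_card T_def assms ..

lemma N_zero: assumes "\<And>s. \<not> [4*s = r] (mod d)" shows "N_count r d M = 0"
proof -
  have "{y \<in> Rset M. [4*(fst y + snd y) = r] (mod d)} = {}" using assms by blast
  thus ?thesis unfolding N_card by (simp only: card.empty)
qed

lemma T_asym:
  fixes m c :: int assumes m: "m > 0" and c: "0 \<le> c" "c < m"
  shows "\<exists>C. \<forall>M::nat. M \<ge> 1 \<longrightarrow>
     \<bar>real (card (T m c M)) - (1 / (2 * real_of_int m)) * real M ^ 2\<bar> \<le> C * real M"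
proof (intro exI allI impI)
  fix M :: nat assume M: "M \<ge> 1"
  define K where "K = real_of_int m"
  define N where "N = real (card (T m c M))"
  have K: "K > 0" using m by (simp add: K_def)
  have h0: "real_of_int \<bar>2 * m * int (card (T m c M)) - int M ^ 2\<bar> \<le> real_of_int ((4 * m + 3) * int M + 2 * m)"
    using T_bound[OF m c, of M] by (simp only: of_int_le_iff)
  have h: "\<bar>2 * K * N - real M ^ 2\<bar> \<le> (4 * K + 3) * real M + 2 * K"
    using h0 by (simp add: K_def N_def)
  have h2: "(4 * K + 3) * real M + 2 * K \<le> (6 * K + 3) * real M"
    using M K by (simp add: algebra_simps)
  have eq: "N - (1 / (2 * K)) * real M ^ 2 = (2 * K * N - real M ^ 2) / (2 * K)"
    using K by (simp add: field_simps)
  have "\<bar>N - (1 / (2 * K)) * real M ^ 2\<bar> = \<bar>2 * K * N - real M ^ 2\<bar> / (2 * K)"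
    unfolding eq using K by (simp add: abs_divide)
  also have "\<dots> \<le> ((6 * K + 3) * real M) / (2 * K)"
    using h h2 K by (intro divide_right_mono) auto
  also have "\<dots> = ((6 * K + 3) / (2 * K)) * real M" by simp
  finally show "\<bar>real (card (T m c M)) - (1 / (2 * real_of_int m)) * real M ^ 2\<bar>
      \<le> ((6 * K + 3) / (2 * K)) * real M" by (simp add: N_def K_def)
qed

lemma cong_red:
  fixes m v u r0 s t :: int assumes "u * v = 1 + m * t"
  shows "m dvd (v * s - r0) \<longleftrightarrow> s mod m = (u * r0) mod m"
proof -
  have e: "s mod m = (u * r0) mod m \<longleftrightarrow> m dvd (s - u * r0)"
    by (simp add: cong_iff_dvd_diff[symmetric] cong_def)
  have e1: "s - u * r0 = u * (v * s - r0) - m * (t * s)" using assms by (simp add: algebra_simps)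
  have e2: "v * s - r0 = v * (s - u * r0) + m * (t * r0)" using assms by (simp add: algebra_simps)
  show ?thesis unfolding e
  proof
    assume "m dvd (v * s - r0)" thus "m dvd (s - u * r0)" unfolding e1 by simp
  next
    assume "m dvd (s - u * r0)" thus "m dvd (v * s - r0)" unfolding e2 by simp
  qed
qed

theorem theorem1p3:
  fixes d r :: int
  assumes "d \<ge> 2" and "0 \<le> r" and "r \<le> d - 1"
  shows "(((2 dvd d \<and> \<not> 4 dvd d \<and> \<not> 2 dvd r) \<or> (4 dvd d \<and> \<not> 4 dvd r))
           \<longrightarrow> (\<forall>M::nat. M \<ge> 1 \<longrightarrow> N_count r d M = 0))
    \<and> ((2 dvd d \<and> \<not> 4 dvd d \<and> 2 dvd r)
           \<longrightarrow> (\<exists>C::real. \<forall>M::nat. M \<ge> 1 \<longrightarrow>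
                 \<bar>real (N_count r d M) - (1 / real_of_int d) * real M ^ 2\<bar> \<le> C * real M))
    \<and> ((4 dvd d \<and> 4 dvd r)
           \<longrightarrow> (\<exists>C::real. \<forall>M::nat. M \<ge> 1 \<longrightarrow>
                 \<bar>real (N_count r d M) - (2 / real_of_int d) * real M ^ 2\<bar> \<le> C * real M))
    \<and> (\<not> 2 dvd d
           \<longrightarrow> (\<exists>C::real. \<forall>M::nat. M \<ge> 1 \<longrightarrow>
                 \<bar>real (N_count r d M) - (1 / (2 * real_of_int d)) * real M ^ 2\<bar> \<le> C * real M))"
proof -
  have main: "\<exists>C. \<forall>M::nat. M \<ge> 1 \<longrightarrow>
     \<bar>real (N_count r d M) - (1 / (2 * real_of_int m)) * real M ^ 2\<bar> \<le> C * real M"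
    if m: "m > 0" and c: "0 \<le> c" "c < m" and h: "\<And>s. [4*s = r] (mod d) \<longleftrightarrow> s mod m = c" for m c
  proof -
    have "\<And>M. N_count r d M = card (T m c M)" by (rule N_T) (rule h)
    thus ?thesis using T_asym[OF m c] by simp
  qed
  have cg: "\<And>s. [4*s = r] (mod d) \<longleftrightarrow> d dvd (4*s - r)" by (rule cong_iff_dvd_diff)
  have P1: "\<forall>M::nat. M \<ge> 1 \<longrightarrow> N_count r d M = 0"
    if H: "(2 dvd d \<and> \<not> 4 dvd d \<and> \<not> 2 dvd r) \<or> (4 dvd d \<and> \<not> 4 dvd r)"
  proof -
    have "\<not> [4*s = r] (mod d)" for s
    proof
      assume "[4*s = r] (mod d)"
      hence D: "d dvd (4*s - r)" using cg by simp
      show False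
      proof (cases "4 dvd d")
        case True
        hence "4 dvd (4*s - r)" using D dvd_trans by blast
        hence "4 dvd r" by presburger
        thus False using H True by blast
      next
        case False
        hence "2 dvd d" "\<not> 2 dvd r" using H by auto
        hence "2 dvd (4*s - r)" using D dvd_trans by blast
        hence "2 dvd r" by presburger
        thus False using \<open>\<not> 2 dvd r\<close> by blast
      qed
    qed
    thus ?thesis using N_zero by blast
  qed
  have P2: "\<exists>C::real. \<forall>M::nat. M \<ge> 1 \<longrightarrow>
                 \<bar>real (N_count r d M) - (1 / real_of_int d) * real M ^ 2\<bar> \<le> C * real M"
    if H: "2 dvd d \<and> \<not> 4 dvd d \<and> 2 dvd r"
  proof -
    obtain m where dm: "d = 2 * m" using H by blast
    obtain r0 where rr: "r = 2 * r0" using H by blast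
    have "\<not> 2 dvd m" using H dm by auto
    then obtain k where mk: "m = 2 * k + 1" by (metis oddE)
    have m: "m > 0" using dm assms by simp
    have r0: "0 \<le> r0" "r0 < m" using rr dm assms by simp_all
    have "(k + 1) * 2 = 1 + m * 1" using mk by simp
    note cr = cong_red[OF this]
    have "[4*s = r] (mod d) \<longleftrightarrow> s mod m = ((k + 1) * r0) mod m" for s
    proof -
      have e: "4 * s - r = 2 * (2 * s - r0)" using rr by simp
      have "[4*s = r] (mod d) \<longleftrightarrow> d dvd (4*s - r)" by (rule cg)
      also have "\<dots> \<longleftrightarrow> 2 * m dvd 2 * (2 * s - r0)" by (simp only: dm e)
      also have "\<dots> \<longleftrightarrow> m dvd (2 * s - r0)" by (rule dvd_times_left_cancel_iff) simp
      finally show ?thesis using cr by simp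
    qed
    from main[OF m _ _ this] obtain C where C: "\<forall>M::nat. M \<ge> 1 \<longrightarrow>
     \<bar>real (N_count r d M) - (1 / (2 * real_of_int m)) * real M ^ 2\<bar> \<le> C * real M"
      using m by auto
    have "real_of_int d = 2 * real_of_int m" using dm by simp
    thus ?thesis using C by auto
  qed
  have P3: "\<exists>C::real. \<forall>M::nat. M \<ge> 1 \<longrightarrow>
                 \<bar>real (N_count r d M) - (2 / real_of_int d) * real M ^ 2\<bar> \<le> C * real M"
    if H: "4 dvd d \<and> 4 dvd r"
  proof -
    obtain m where dm: "d = 4 * m" using H by blast
    obtain r0 where rr: "r = 4 * r0" using H by blast
    have m: "m > 0" using dm assms by simp
    have r0: "0 \<le> r0" "r0 < m" using rr dm assms by simp_all
    have "(1::int) * 1 = 1 + m * 0" by simp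
    note cr = cong_red[OF this]
    have "[4*s = r] (mod d) \<longleftrightarrow> s mod m = (1 * r0) mod m" for s
    proof -
      have e: "4 * s - r = 4 * (1 * s - r0)" using rr by simp
      have "[4*s = r] (mod d) \<longleftrightarrow> d dvd (4*s - r)" by (rule cg)
      also have "\<dots> \<longleftrightarrow> 4 * m dvd 4 * (1 * s - r0)" by (simp only: dm e)
      also have "\<dots> \<longleftrightarrow> m dvd (1 * s - r0)" by (rule dvd_times_left_cancel_iff) simp
      finally show ?thesis using cr by simp
    qed
    from main[OF m _ _ this] obtain C where C: "\<forall>M::nat. M \<ge> 1 \<longrightarrow>
     \<bar>real (N_count r d M) - (1 / (2 * real_of_int m)) * real M ^ 2\<bar> \<le> C * real M"
      using m by auto
    have "real_of_int d = 4 * real_of_int m" using dm by simp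
    hence "2 / real_of_int d = 1 / (2 * real_of_int m)" by simp
    thus ?thesis using C by auto
  qed
  have P4: "\<exists>C::real. \<forall>M::nat. M \<ge> 1 \<longrightarrow>
                 \<bar>real (N_count r d M) - (1 / (2 * real_of_int d)) * real M ^ 2\<bar> \<le> C * real M"
    if H: "\<not> 2 dvd d"
  proof -
    obtain u t where ut: "u * 4 = 1 + d * t"
    proof (cases "d mod 4 = 1")
      case True
      then obtain k where "d = 4 * k + 1" by (metis div_mult_mod_eq mult.commute)
      thus ?thesis using that[of "3 * k + 1" 3] by simp
    next
      case False
      hence "d mod 4 = 3" using H by presburger
      then obtain k where "d = 4 * k + 3" by (metis div_mult_mod_eq mult.commute)
      thus ?thesis using that[of "k + 1" 1] by simp
    qed
    note cr = cong_red[OF ut]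
    have m: "d > 0" using assms by simp
    have "[4*s = r] (mod d) \<longleftrightarrow> s mod d = (u * r) mod d" for s
      using cg cr by simp
    from main[OF m _ _ this] show ?thesis using m by auto
  qed
  show ?thesis using P1 P2 P3 P4 by blast
qed

end
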